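(* Let $q\ge 7$ and $s\in[1,7]$ be integers, $C$ a finite set with $|C|=2q+s$, and $M\in\mathcal M(6,q,C)$. If the maximum degree of the graph $G$ associated with $M$ is at least $4$, then $q\le 40-5s$.
   Context: $\mathcal M(6,q,C)$ is the set of $6\times q$ matrices $M$ with entries from $C$ such that each row has $q$ pairwise distinct entries, each column has $6$ pairwise distinct entries, and every pair of distinct colours of $C$ appears together in some row or some column of $M$. The frequency of a colour is the number of entries of $M$ equal to it. For rows $i\ne k$, $r(i,k)$ is the number of colours of frequency exactly $2$ appearing in both row $i$ and row $k$. The graph $G$ associated with $M$ has vertex set $\{1,\dots,6\}$ (the rows), with $\{i,k\}$ an edge iff $r(i,k)\ge 1$. *)

theory Defs
  imports Main
begin

text \<open>A 6 x q matrix is a function M :: nat => nat => 'c, with rows indexed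
  by {0..<6} and columns by {0..<q}; values outside this range are irrelevant.\<close>

definition in_M :: "nat \<Rightarrow> nat \<Rightarrow> 'c set \<Rightarrow> (nat \<Rightarrow> nat \<Rightarrow> 'c) \<Rightarrow> bool" where
  "in_M p q C M \<longleftrightarrow>
     (\<forall>i<p. \<forall>j<q. M i j \<in> C) \<and>
     (\<forall>i<p. inj_on (M i) {0..<q}) \<and>
     (\<forall>j<q. inj_on (\<lambda>i. M i j) {0..<p}) \<and>
     (\<forall>a\<in>C. \<forall>b\<in>C. a \<noteq> b \<longrightarrow>
        (\<exists>i<p. a \<in> M i ` {0..<q} \<and> b \<in> M i ` {0..<q}) \<or>
        (\<exists>j<q. a \<in> (\<lambda>i. M i j) ` {0..<p} \<and> b \<in> (\<lambda>i. M i j) ` {0..<p}))"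

definition freq :: "nat \<Rightarrow> nat \<Rightarrow> (nat \<Rightarrow> nat \<Rightarrow> 'c) \<Rightarrow> 'c \<Rightarrow> nat" where
  "freq p q M c = card {(i, j). i < p \<and> j < q \<and> M i j = c}"

definition rcount :: "nat \<Rightarrow> nat \<Rightarrow> (nat \<Rightarrow> nat \<Rightarrow> 'c) \<Rightarrow> nat \<Rightarrow> nat \<Rightarrow> nat" where
  "rcount p q M i k = card {c. freq p q M c = 2 \<and> c \<in> M i ` {0..<q} \<and> c \<in> M k ` {0..<q}}"

definition assoc_adj :: "nat \<Rightarrow> nat \<Rightarrow> (nat \<Rightarrow> nat \<Rightarrow> 'c) \<Rightarrow> nat \<Rightarrow> nat \<Rightarrow> bool" where
  "assoc_adj p q M i k \<longleftrightarrow> i < p \<and> k < p \<and> i \<noteq> k \<and> rcount p q M i k \<ge> 1"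

definition assoc_degree :: "nat \<Rightarrow> nat \<Rightarrow> (nat \<Rightarrow> nat \<Rightarrow> 'c) \<Rightarrow> nat \<Rightarrow> nat" where
  "assoc_degree p q M i = card {k. assoc_adj p q M i k}"

definition assoc_maxdeg :: "nat \<Rightarrow> nat \<Rightarrow> (nat \<Rightarrow> nat \<Rightarrow> 'c) \<Rightarrow> nat" where
  "assoc_maxdeg p q M = Max (assoc_degree p q M ` {0..<p})"

end

theory Submission
  imports Defs
begin

lemma cover_lemma:
  assumes "in_M 6 q C M" "c \<in> C" "d \<in> C" "d \<noteq> c"
    and "\<And>i j. i<6 \<Longrightarrow> j<q \<Longrightarrow> M i j = c \<Longrightarrow> (i,j) \<in> S"
  shows "\<exists>i j. (i,j) \<in> S \<and> (d \<in> M i ` {0..<q} \<or> d \<in> (\<lambda>m. M m j) ` {0..<6})"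
proof -
  from assms(1-4) have "(\<exists>i<6. c \<in> M i ` {0..<q} \<and> d \<in> M i ` {0..<q}) \<or>
     (\<exists>j<q. c \<in> (\<lambda>i. M i j) ` {0..<6} \<and> d \<in> (\<lambda>i. M i j) ` {0..<6})"
    unfolding in_M_def by metis
  then show ?thesis
  proof
    assume "\<exists>i<6. c \<in> M i ` {0..<q} \<and> d \<in> M i ` {0..<q}"
    then obtain i j where "i<6" "j<q" "M i j = c" "d \<in> M i ` {0..<q}" by auto
    with assms(5) show ?thesis by blast
  next
    assume "\<exists>j<q. c \<in> (\<lambda>i. M i j) ` {0..<6} \<and> d \<in> (\<lambda>i. M i j) ` {0..<6}"
    then obtain i j where "i<6" "j<q" "M i j = c" "d \<in> (\<lambda>i. M i j) ` {0..<6}" by auto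
    with assms(5) show ?thesis by blast
  qed
qed

lemma row_card:
  assumes "in_M 6 q C M" "i < 6"
  shows "card (M i ` {0..<q}) = q"
  using assms by (simp add: in_M_def card_image)

lemma cells_finite: "finite {(a,b). a<(6::nat) \<and> b<(q::nat) \<and> M a b = x}"
  by (rule finite_subset[of _ "{0..<6} \<times> {0..<q}"]) auto

lemma freq_ge2:
  assumes "in_M 6 q C M" "q \<ge> 7" "card C = 2*q+s" "finite C" "i<6" "j<q"
  shows "freq 6 q M (M i j) \<ge> 2"
proof (rule ccontr)
  define x where "x = M i j"
  define S where "S = {(a,b). a<(6::nat) \<and> b<q \<and> M a b = x}"
  have fS: "finite S" unfolding S_def by (rule cells_finite)
  have ij: "(i,j) \<in> S" using assms unfolding S_def x_def by auto
  assume "\<not> 2 \<le> freq 6 q M (M i j)"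
  then have "card S \<le> Suc 0" unfolding S_def x_def freq_def by simp
  then have Sone: "\<forall>y\<in>S. y = (i,j)" using ij fS card_le_Suc0_iff_eq by blast
  have xC: "x \<in> C" using assms unfolding in_M_def x_def by auto
  have "C \<subseteq> M i ` {0..<q} \<union> (\<lambda>m. M m j) ` {0..<6}"
  proof
    fix d assume dC: "d \<in> C"
    show "d \<in> M i ` {0..<q} \<union> (\<lambda>m. M m j) ` {0..<6}"
    proof (cases "d = x")
      case True then show ?thesis using assms unfolding x_def by auto
    next
      case False
      have "\<And>a b. a<6 \<Longrightarrow> b<q \<Longrightarrow> M a b = x \<Longrightarrow> (a,b) \<in> {(i,j)}"
        using Sone unfolding S_def by auto
      from cover_lemma[OF assms(1) xC dC False this] obtain a b where
        "(a,b) \<in> {(i,j)}" "d \<in> M a ` {0..<q} \<or> d \<in> (\<lambda>m. M m b) ` {0..<6}" by blast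
      then show ?thesis by blast
    qed
  qed
  then have "card C \<le> card (M i ` {0..<q} \<union> (\<lambda>m. M m j) ` {0..<6})"
    by (intro card_mono) auto
  also have "\<dots> \<le> card (M i ` {0..<q}) + card ((\<lambda>m. M m j) ` {0..<(6::nat)})"
    by (rule card_Un_le)
  also have "\<dots> \<le> q + 6"
    using row_card[OF assms(1,5)] card_image_le[of "{0..<(6::nat)}" "\<lambda>m. M m j"] by simp
  finally show False using assms by simp
qed

lemma key_lemma:
  assumes "in_M 6 q C M" "card C = 2*q+s" "finite C" "i<6" "k<6" "i \<noteq> k"
    and "rcount 6 q M i k \<ge> 1"
  shows "card (M i ` {0..<q} \<inter> M k ` {0..<q}) + s \<le> 8"
proof -
  let ?A = "\<lambda>m. M m ` {0..<q}"
  let ?R = "{c. freq 6 q M c = 2 \<and> c \<in> ?A i \<and> c \<in> ?A k}"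
  have "?R \<noteq> {}" using assms(7) unfolding rcount_def by (metis card.empty not_one_le_zero)
  then obtain c where c2: "freq 6 q M c = 2" and ci: "c \<in> ?A i" and ck: "c \<in> ?A k" by blast
  obtain j1 where j1: "j1 < q" "M i j1 = c" using ci by auto
  obtain j2 where j2: "j2 < q" "M k j2 = c" using ck by auto
  define S where "S = {(a,b). a<(6::nat) \<and> b<q \<and> M a b = c}"
  have fS: "finite S" unfolding S_def by (rule cells_finite)
  have cS: "card S = 2" using c2 unfolding S_def freq_def by simp
  have sub: "{(i,j1),(k,j2)} \<subseteq> S" using assms j1 j2 unfolding S_def by auto
  have "card {(i,j1),(k,j2)} = 2" using assms(6) by simp
  then have Seq: "S = {(i,j1),(k,j2)}" using card_subset_eq[OF fS sub] cS by simp
  have cC: "c \<in> C" using assms(1,4) j1 unfolding in_M_def by auto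
  let ?O = "{0..<(6::nat)} - {i,k}"
  have cO: "card ?O = 4" using assms(4,5,6) by (subst card_Diff_subset) auto
  have "C \<subseteq> ?A i \<union> ?A k \<union> (\<lambda>m. M m j1) ` ?O \<union> (\<lambda>m. M m j2) ` ?O"
  proof
    fix d assume dC: "d \<in> C"
    show "d \<in> ?A i \<union> ?A k \<union> (\<lambda>m. M m j1) ` ?O \<union> (\<lambda>m. M m j2) ` ?O"
    proof (cases "d = c")
      case True then show ?thesis using ci by auto
    next
      case False
      have "\<And>a b. a<6 \<Longrightarrow> b<q \<Longrightarrow> M a b = c \<Longrightarrow> (a,b) \<in> S"
        unfolding S_def by auto
      from cover_lemma[OF assms(1) cC dC False this] obtain a b where
        ab: "(a,b) \<in> S" "d \<in> ?A a \<or> d \<in> (\<lambda>m. M m b) ` {0..<6}" by blast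
      from ab(1) Seq have abc: "(a,b) = (i,j1) \<or> (a,b) = (k,j2)" by auto
      show ?thesis
      proof (cases "d \<in> ?A a")
        case True
        moreover have "a = i \<or> a = k" using abc by blast
        ultimately show ?thesis by blast
      next
        case False
        then obtain m where m: "m < 6" "d = M m b" using ab(2) by auto
        have bq: "b < q" and bb: "b = j1 \<or> b = j2" using abc j1 j2 by auto
        show ?thesis
        proof (cases "m = i \<or> m = k")
          case True
          then have "d \<in> ?A i \<or> d \<in> ?A k" using m bq by auto
          then show ?thesis by blast
        next
          case False
          then have "m \<in> ?O" using m by auto
          then have "d \<in> (\<lambda>m. M m j1) ` ?O \<or> d \<in> (\<lambda>m. M m j2) ` ?O"
            using m bb by blast
          then show ?thesis by blast
        qed
      qed
    qed
  qed
  then have "card C \<le> card (?A i \<union> ?A k \<union> (\<lambda>m. M m j1) ` ?O \<union> (\<lambda>m. M m j2) ` ?O)"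
    by (intro card_mono) auto
  also have "\<dots> \<le> card (?A i \<union> ?A k) + card ((\<lambda>m. M m j1) ` ?O) + card ((\<lambda>m. M m j2) ` ?O)"
    using card_Un_le[of "?A i \<union> ?A k \<union> (\<lambda>m. M m j1) ` ?O" "(\<lambda>m. M m j2) ` ?O"]
      card_Un_le[of "?A i \<union> ?A k" "(\<lambda>m. M m j1) ` ?O"] by linarith
  also have "\<dots> \<le> card (?A i \<union> ?A k) + 4 + 4"
    using card_image_le[of ?O "\<lambda>m. M m j1"] card_image_le[of ?O "\<lambda>m. M m j2"] cO by simp
  finally have 1: "card C \<le> card (?A i \<union> ?A k) + 8" by simp
  have "card (?A i \<union> ?A k) + card (?A i \<inter> ?A k) = card (?A i) + card (?A k)"
    using card_Un_Int[of "?A i" "?A k"] by simp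
  then have "card (?A i \<union> ?A k) + card (?A i \<inter> ?A k) = 2*q"
    using row_card[OF assms(1,4)] row_card[OF assms(1,5)] by simp
  then show ?thesis using 1 assms(2) by linarith
qed

theorem claim5:
  fixes q s :: nat and C :: "'c set" and M :: "nat \<Rightarrow> nat \<Rightarrow> 'c"
  assumes "q \<ge> 7" and "1 \<le> s" and "s \<le> 7"
    and "finite C" and "card C = 2 * q + s"
    and "in_M 6 q C M"
    and "assoc_maxdeg 6 q M \<ge> 4"
  shows "int q \<le> 40 - 5 * int s"
proof -
  let ?A = "\<lambda>m. M m ` {0..<q}"
  have "assoc_maxdeg 6 q M \<in> assoc_degree 6 q M ` {0..<6}"
    unfolding assoc_maxdeg_def by (rule Max_in) auto
  then obtain i0 where i0: "i0 < 6" "assoc_degree 6 q M i0 \<ge> 4"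
    using assms(7) by auto
  define N where "N = {k. assoc_adj 6 q M i0 k}"
  have Nsub: "N \<subseteq> {0..<6} - {i0}" unfolding N_def assoc_adj_def by auto
  have cN: "card N \<ge> 4" using i0 unfolding N_def assoc_degree_def by simp
  have c5: "card ({0..<(6::nat)} - {i0}) = 5" using i0 by simp
  have cN5: "card N \<le> 5" using card_mono[OF _ Nsub] c5 by simp
  have fN: "finite N" using Nsub finite_subset by blast
  have cO: "card ({0..<6} - {i0} - N) \<le> 1"
    using card_Diff_subset[OF fN Nsub] c5 cN by simp
  have cover: "?A i0 \<subseteq> (\<Union>k\<in>N. ?A i0 \<inter> ?A k)"
  proof
    fix x assume xA: "x \<in> ?A i0"
    then obtain j where j: "j < q" "x = M i0 j" by auto
    show "x \<in> (\<Union>k\<in>N. ?A i0 \<inter> ?A k)"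
    proof (rule ccontr)
      assume nx: "x \<notin> (\<Union>k\<in>N. ?A i0 \<inter> ?A k)"
      define S where "S = {(a,b). a<(6::nat) \<and> b<q \<and> M a b = x}"
      have fS: "finite S" unfolding S_def by (rule cells_finite)
      have ij: "(i0,j) \<in> S" using i0 j unfolding S_def by auto
      have cS: "card S \<ge> 2" using freq_ge2[OF assms(6,1,5,4) i0(1) j(1)] j
        unfolding S_def freq_def by simp
      have "S \<noteq> {(i0,j)}" using cS by auto
      then obtain y where y: "y \<in> S" "y \<noteq> (i0,j)" using ij by blast
      obtain m j' where "y = (m,j')" by (cases y)
      then have mj: "(m,j') \<in> S" "(m,j') \<noteq> (i0,j)" using y by auto
      have inj: "inj_on (M a) {0..<q}" if "a < 6" for a
        using assms(6) that unfolding in_M_def by auto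
      have m6: "m < 6" "j' < q" "M m j' = x" using mj unfolding S_def by auto
      have mi0: "m \<noteq> i0"
      proof
        assume "m = i0"
        then have "j' = j" using inj[OF i0(1)] m6 j by (auto dest: inj_onD)
        then show False using mj `m = i0` by simp
      qed
      have xm: "x \<in> ?A m" using m6 by auto
      have mN: "m \<notin> N" using nx xm xA by auto
      have fstS: "fst ` S \<subseteq> {i0, m}"
      proof
        fix a assume "a \<in> fst ` S"
        then obtain b where ab: "(a,b) \<in> S" by auto
        then have a6: "a < 6" "x \<in> ?A a" unfolding S_def by auto
        show "a \<in> {i0, m}"
        proof (rule ccontr)
          assume an: "a \<notin> {i0, m}"
          then have "a \<notin> N" using nx a6 xA by auto
          then have "{a, m} \<subseteq> {0..<6} - {i0} - N" using a6 m6 an mi0 mN by auto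
          then have "card {a,m} \<le> card ({0..<6} - {i0} - N)" by (intro card_mono) auto
          then show False using cO an by simp
        qed
      qed
      have "inj_on fst S"
      proof (rule inj_onI)
        fix u v assume uv: "u \<in> S" "v \<in> S" "fst u = fst v"
        obtain a b where u: "u = (a,b)" by (cases u)
        obtain a' b' where v: "v = (a',b')" by (cases v)
        have "a = a'" "a < 6" "b < q" "b' < q" "M a b = M a b'"
          using uv u v unfolding S_def by auto
        then have "b = b'" using inj[of a] by (auto dest: inj_onD)
        then show "u = v" using u v `a = a'` by simp
      qed
      then have "card S = card (fst ` S)" by (simp add: card_image)
      also have "\<dots> \<le> card {i0, m}" using fstS by (intro card_mono) auto
      also have "\<dots> = 2" using mi0 by simp
      finally have "card S \<le> 2" .
      then have f2: "freq 6 q M x = 2" using cS unfolding S_def freq_def by simp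
      have "x \<in> {c. freq 6 q M c = 2 \<and> c \<in> ?A i0 \<and> c \<in> ?A m}" using f2 xA xm by auto
      moreover have "finite {c. freq 6 q M c = 2 \<and> c \<in> ?A i0 \<and> c \<in> ?A m}"
        by (rule finite_subset[of _ "?A i0"]) auto
      ultimately have "card {c. freq 6 q M c = 2 \<and> c \<in> ?A i0 \<and> c \<in> ?A m} > 0"
        using card_gt_0_iff by blast
      then have "rcount 6 q M i0 m \<ge> 1" unfolding rcount_def by simp
      then have "m \<in> N" unfolding N_def assoc_adj_def using i0 m6 mi0 by auto
      then show False using mN by simp
    qed
  qed
  have bnd: "card (?A i0 \<inter> ?A k) \<le> 8 - s" if "k \<in> N" for k
  proof -
    have "k < 6" "i0 \<noteq> k" "rcount 6 q M i0 k \<ge> 1"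
      using that unfolding N_def assoc_adj_def by auto
    from key_lemma[OF assms(6,5,4) i0(1) this] show ?thesis by simp
  qed
  have "q = card (?A i0)" using row_card[OF assms(6) i0(1)] by simp
  also have "\<dots> \<le> card (\<Union>k\<in>N. ?A i0 \<inter> ?A k)" using cover fN by (intro card_mono) auto
  also have "\<dots> \<le> (\<Sum>k\<in>N. card (?A i0 \<inter> ?A k))" by (rule card_UN_le[OF fN])
  also have "\<dots> \<le> (\<Sum>k\<in>N. 8 - s)" using bnd by (intro sum_mono) auto
  also have "\<dots> = card N * (8 - s)" by simp
  also have "\<dots> \<le> 5 * (8 - s)" using cN5 by simp
  finally have "q \<le> 5 * (8 - s)" .
  then show ?thesis using assms(3) by linarith
qed

end
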